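(* Let $(\mathsf K,\mathsf D)$ be a differential ring, $n\ge2$, $L=\sum_{k=0}^n\binom nk a_k\mathsf D^{n-k}$ with $a_0=1$, with gauge–Wilczynski covariants $I_2(L),\dots,I_n(L)$, and set $I_0=1$, $I_1=0$. Let $u\in\mathsf K$ be arbitrary and define $$L^{\star_u}:=\sum_{m=0}^n\binom nm I_m(L)\,\bigl(\mathsf D+(a_1-u)\bigr)^{n-m}=\sum_{k=0}^n\binom nk a_k^{\star_u}\mathsf D^{n-k}.$$ Then for $k=0,1,\dots,n$, $$a_k^{\star_u}=\sum_{m=0}^k\binom km I_m(L)\,P_{k-m}(a_1-u)=\sum_{m=0}^k\binom km\Bigl(\sum_{j=0}^m\binom mj a_{m-j}Q_j(-a_1)\Bigr)P_{k-m}(a_1-u).$$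
   Context: $(\mathsf K,\mathsf D)$: unital associative (possibly noncommutative) ring with derivation; $\mathsf K\langle\mathsf D\rangle$: Ore algebra, $\mathsf D a=a\mathsf D+\mathsf D(a)$. The covariants $I_k(L)$ are the unique elements with $L=\nabla^n+\sum_{k=2}^n\binom nk I_k(L)\nabla^{n-k}$, $\nabla=\mathsf D+a_1$. Bell polynomials: $P_0(v)=1$, $P_{m+1}(v)=\mathsf D(P_m(v))+vP_m(v)$; with $\Delta_{a_1}(b)=\mathsf D(b)+a_1b-ba_1$, $Q_0(v)=1$, $Q_{m+1}(v)=\Delta_{a_1}(Q_m(v))+vQ_m(v)$. *)

theory Defs
  imports Main
begin

definition is_derivation :: "('a::ring_1 \<Rightarrow> 'a) \<Rightarrow> bool" where
  "is_derivation D \<longleftrightarrow> (\<forall>x y. D (x + y) = D x + D y) \<and> (\<forall>x y. D (x * y) = D x * y + x * D y)"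

text \<open>Elements of the Ore algebra K<D> are written uniquely as sum c_i D^i (coefficients
  on the left); we represent such an operator by its coefficient function
  (i maps to the coefficient of D^i).\<close>

definition op_one :: "nat \<Rightarrow> 'a::ring_1" where
  "op_one = (\<lambda>i. if i = 0 then 1 else 0)"

text \<open>Left multiplication by D + b in the Ore algebra, using D c = c D + D(c):
  (D + b) (c D^i) = c D^(i+1) + (D(c) + b c) D^i.\<close>
definition op_lmul_shift :: "('a::ring_1 \<Rightarrow> 'a) \<Rightarrow> 'a \<Rightarrow> (nat \<Rightarrow> 'a) \<Rightarrow> (nat \<Rightarrow> 'a)" where
  "op_lmul_shift D b p = (\<lambda>i. D (p i) + b * p i + (if i = 0 then 0 else p (i - 1)))"

definition shift_pow :: "('a::ring_1 \<Rightarrow> 'a) \<Rightarrow> 'a \<Rightarrow> nat \<Rightarrow> (nat \<Rightarrow> 'a)" where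
  "shift_pow D b m = (op_lmul_shift D b ^^ m) op_one"

fun bellP :: "('a::ring_1 \<Rightarrow> 'a) \<Rightarrow> 'a \<Rightarrow> nat \<Rightarrow> 'a" where
  "bellP D v 0 = 1"
| "bellP D v (Suc m) = D (bellP D v m) + v * bellP D v m"

definition Delta :: "('a::ring_1 \<Rightarrow> 'a) \<Rightarrow> 'a \<Rightarrow> 'a \<Rightarrow> 'a" where
  "Delta D c b = D b + c * b - b * c"

fun bellQ :: "('a::ring_1 \<Rightarrow> 'a) \<Rightarrow> 'a \<Rightarrow> 'a \<Rightarrow> nat \<Rightarrow> 'a" where
  "bellQ D c v 0 = 1"
| "bellQ D c v (Suc m) = Delta D c (bellQ D c v m) + v * bellQ D c v m"

definition opL :: "nat \<Rightarrow> (nat \<Rightarrow> 'a::ring_1) \<Rightarrow> nat \<Rightarrow> 'a" where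
  "opL n a = (\<lambda>i. \<Sum>k\<le>n. if n - k = i then of_nat (n choose k) * a k else 0)"

end

theory Submission
  imports Defs
begin

lemma pascal_sum:
  fixes f :: "nat \<Rightarrow> nat \<Rightarrow> 'a::ring_1"
  shows "(\<Sum>j\<le>s. of_nat (s choose j) * (f (Suc j) (s-j) + f j (Suc s - j)))
       = (\<Sum>j\<le>Suc s. of_nat (Suc s choose j) * f j (Suc s - j))"
proof -
  have e1: "(\<Sum>j\<le>s. of_nat (s choose j) * f j (Suc s - j))
     = f 0 (Suc s) + (\<Sum>j<s. of_nat (s choose Suc j) * f (Suc j) (s - j))"
    by (simp only: lessThan_Suc_atMost[symmetric] sum.lessThan_Suc_shift) simp
  have e2: "(\<Sum>j\<le>s. of_nat (s choose Suc j) * f (Suc j) (s - j))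
     = (\<Sum>j<s. of_nat (s choose Suc j) * f (Suc j) (s - j))"
    by (simp add: lessThan_Suc_atMost[symmetric] binomial_eq_0)
  have "(\<Sum>j\<le>Suc s. of_nat (Suc s choose j) * f j (Suc s - j))
     = f 0 (Suc s) + (\<Sum>j\<le>s. of_nat (Suc s choose Suc j) * f (Suc j) (s - j))"
    by (simp only: sum.atMost_Suc_shift) simp
  also have "\<dots> = f 0 (Suc s) + (\<Sum>j\<le>s. of_nat (s choose j) * f (Suc j) (s - j))
      + (\<Sum>j\<le>s. of_nat (s choose Suc j) * f (Suc j) (s - j))"
    by (simp add: sum.distrib distrib_right add.assoc)
  finally show ?thesis using e1 e2
    by (simp add: distrib_left sum.distrib algebra_simps)
qed

lemma ofnat_mult2: "of_nat a * x * (of_nat b * y) = (of_nat (a*b) * (x*y) :: 'a::ring_1)"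
proof -
  have "x * (of_nat b * y) = of_nat b * (x*y)" by (metis mult.assoc mult_of_nat_commute)
  then show ?thesis by (simp add: mult.assoc)
qed

locale der = fixes D :: "'a::ring_1 \<Rightarrow> 'a" assumes d: "is_derivation D"
begin
lemma add: "D (x + y) = D x + D y" using d unfolding is_derivation_def by blast
lemma mult: "D (x * y) = D x * y + x * D y" using d unfolding is_derivation_def by blast
lemma zero[simp]: "D 0 = 0" using add[of 0 0] by simp
lemma one[simp]: "D 1 = 0" using mult[of 1 1] by simp
lemma minus: "D (- x) = - D x" using add[of x "-x"] by (simp add: minus_unique)
lemma diff: "D (x - y) = D x - D y" using add[of x "-y"] minus[of y] by simp
lemma sum: "D (sum f A) = (\<Sum>x\<in>A. D (f x))"
  by (induction A rule: infinite_finite_induct) (auto simp: add)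
lemma of_nat_mult: "D (of_nat c * x) = of_nat c * D x"
  by (induction c) (auto simp: add distrib_right)

lemma leibniz:
  assumes "\<And>x y. D (x * y) = S x * y + x * T y"
  shows "(D^^s) (x*y) = (\<Sum>j\<le>s. of_nat (s choose j) * ((S^^j) x * (T^^(s-j)) y))"
proof (induction s)
  case 0 then show ?case by simp
next
  case (Suc s)
  have "(D^^Suc s) (x*y) = (\<Sum>j\<le>s. of_nat (s choose j) * D ((S^^j) x * (T^^(s-j)) y))"
    using Suc by (simp add: sum of_nat_mult)
  also have "\<dots> = (\<Sum>j\<le>s. of_nat (s choose j) * ((S^^Suc j) x * (T^^(s-j)) y
        + (S^^j) x * (T^^(Suc s - j)) y))"
    by (intro sum.cong refl) (simp add: assms Suc_diff_le)
  also have "\<dots> = (\<Sum>j\<le>Suc s. of_nat (Suc s choose j) * ((S^^j) x * (T^^(Suc s-j)) y))"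
    using pascal_sum[of s "\<lambda>j l. (S^^j) x * (T^^l) y"] by simp
  finally show ?case .
qed

lemma shift_pow_eq:
  "shift_pow D b N i = (if i \<le> N then of_nat (N choose i) * bellP D b (N - i) else 0)"
proof (induction N arbitrary: i)
  case 0 then show ?case by (simp add: shift_pow_def op_one_def)
next
  case (Suc N)
  have sp: "shift_pow D b (Suc N) i = op_lmul_shift D b (shift_pow D b N) i"
    by (simp add: shift_pow_def)
  show ?case
  proof (cases i)
    case 0 then show ?thesis unfolding sp op_lmul_shift_def using Suc.IH[of 0]
      by simp
  next
    case (Suc j)
    show ?thesis
    proof (cases "j < N")
      case True
      define m where "m = N - Suc j"
      have e: "Suc N - i = Suc m" "N - j = Suc m" "N - i = m" using Suc True m_def by auto
      have "shift_pow D b (Suc N) i = D (of_nat (N choose i) * bellP D b m)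
          + b * (of_nat (N choose i) * bellP D b m) + of_nat (N choose j) * bellP D b (Suc m)"
        unfolding sp op_lmul_shift_def using Suc.IH[of i] Suc.IH[of j] True e \<open>i = Suc j\<close> by simp
      also have "\<dots> = of_nat (N choose i) * bellP D b (Suc m) + of_nat (N choose j) * bellP D b (Suc m)"
        by (simp add: of_nat_mult distrib_left mult.assoc[symmetric] mult_of_nat_commute[of _ b])
      also have "\<dots> = of_nat (Suc N choose i) * bellP D b (Suc m)"
        using \<open>i = Suc j\<close> by (simp add: distrib_right)
      finally show ?thesis using e True \<open>i = Suc j\<close> by simp
    next
      case False
      then show ?thesis unfolding sp op_lmul_shift_def using Suc.IH[of i] Suc.IH[of j] \<open>i = Suc j\<close>
        by auto
    qed
  qed
qed

lemma bellP_iter: "bellP D v m = ((\<lambda>y. D y + v * y)^^m) 1"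
  by (induction m) auto

lemma bellQ_iter: "bellQ D c (- c) m = ((\<lambda>x. D x - x * c)^^m) 1"
  by (induction m) (auto simp: Delta_def)

lemma D_pow_one: "(D^^s) 1 = (if s = 0 then 1 else 0)"
  by (induction s) auto

lemma R_id: "(\<Sum>j\<le>s. of_nat (s choose j) * (bellQ D c (- c) j * bellP D c (s - j)))
   = (if s = 0 then 1 else 0)"
proof -
  have "(D^^s) (1 * 1) = (\<Sum>j\<le>s. of_nat (s choose j) * (((\<lambda>x. D x - x * c)^^j) 1
       * ((\<lambda>y. D y + c * y)^^(s-j)) 1))"
    by (rule leibniz) (simp add: mult algebra_simps)
  then show ?thesis by (simp add: bellP_iter bellQ_iter D_pow_one)
qed

lemma coeff_extract:
  assumes "k \<le> n"
  shows "(\<Sum>m\<le>n. of_nat (n choose m) * X m * shift_pow D b (n-m) (n-k))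
     = of_nat (n choose k) * (\<Sum>m\<le>k. of_nat (k choose m) * X m * bellP D b (k-m))"
proof -
  have "(\<Sum>m\<le>n. of_nat (n choose m) * X m * shift_pow D b (n-m) (n-k))
     = (\<Sum>m\<le>n. if m \<le> k then of_nat (n choose k) * (of_nat (k choose m) * X m * bellP D b (k-m)) else 0)"
  proof (intro sum.cong refl)
    fix m assume m: "m \<in> {..n}"
    show "of_nat (n choose m) * X m * shift_pow D b (n-m) (n-k)
      = (if m \<le> k then of_nat (n choose k) * (of_nat (k choose m) * X m * bellP D b (k-m)) else 0)"
    proof (cases "m \<le> k")
      case True
      have c1: "(n - m) choose (n - k) = (n - m) choose (k - m)"
        using True assms binomial_symmetric[of "k - m" "n - m"] by (simp add: diff_diff_cancel)
      have c2: "(n choose m) * ((n - m) choose (k - m)) = (n choose k) * (k choose m)"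
        using choose_mult[of m k n] True assms by simp
      have "of_nat (n choose m) * X m * shift_pow D b (n-m) (n-k)
          = of_nat (n choose m) * X m * (of_nat ((n - m) choose (k - m)) * bellP D b (k - m))"
      proof -
        have "n - k \<le> n - m" "n - m - (n - k) = k - m" using True assms by auto
        then show ?thesis using c1 by (simp add: shift_pow_eq)
      qed
      also have "\<dots> = of_nat ((n choose m) * ((n - m) choose (k - m))) * (X m * bellP D b (k - m))"
        by (rule ofnat_mult2)
      also have "\<dots> = of_nat (n choose k) * (of_nat (k choose m) * X m * bellP D b (k-m))"
        by (simp only: c2 Nat.of_nat_mult mult.assoc)
      finally show ?thesis using True by simp
    next
      case False
      then have "\<not> n - k \<le> n - m" using assms m by auto
      then show ?thesis using False by (simp add: shift_pow_eq)
    qed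
  qed
  also have "\<dots> = (\<Sum>m\<le>k. of_nat (n choose k) * (of_nat (k choose m) * X m * bellP D b (k-m)))"
  proof -
    have "{..n} \<inter> {m. m \<le> k} = {..k}" using assms by auto
    then show ?thesis by (simp add: sum.If_cases)
  qed
  finally show ?thesis by (simp add: sum_distrib_left)
qed

lemma opL_coeff: "k \<le> n \<Longrightarrow> opL n a (n - k) = of_nat (n choose k) * a k"
  unfolding opL_def
proof -
  assume k: "k \<le> n"
  have "(\<Sum>k'\<le>n. if n - k' = n - k then of_nat (n choose k') * a k' else 0)
    = (\<Sum>k'\<le>n. if k' = k then of_nat (n choose k') * a k' else 0)"
    using k by (intro sum.cong refl) auto
  then show "(\<Sum>k'\<le>n. if n - k' = n - k then of_nat (n choose k') * a k' else 0)
    = of_nat (n choose k) * a k" using k by simp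
qed

lemma inv_id:
  "(\<Sum>m\<le>k. of_nat (k choose m) * (\<Sum>j\<le>m. of_nat (m choose j) * a (m - j) * bellQ D c (- c) j)
      * bellP D c (k - m)) = a k"
proof -
  define F where "F = (\<lambda>m j. of_nat ((k choose m) * (m choose j)) * (a (m - j) * (bellQ D c (- c) j * bellP D c (k - m))))"
  have s1: "(\<Sum>m\<le>k. of_nat (k choose m) * (\<Sum>j\<le>m. of_nat (m choose j) * a (m - j) * bellQ D c (- c) j)
      * bellP D c (k - m)) = (\<Sum>m\<le>k. \<Sum>j\<le>m. F m j)"
    by (simp add: F_def sum_distrib_left sum_distrib_right mult.assoc)
  have s2: "(\<Sum>m\<le>k. \<Sum>j\<le>m. F m j) = (\<Sum>r\<le>k. \<Sum>j\<le>k-r. F (r+j) j)"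
  proof -
    have "(\<Sum>m\<le>k. \<Sum>j\<le>m. F m j) = sum (\<lambda>(m,j). F m j) (SIGMA m:{..k}. {..m})"
      by (simp add: sum.Sigma)
    also have "\<dots> = sum (\<lambda>(r,j). F (r+j) j) (SIGMA r:{..k}. {..k-r})"
      by (rule sum.reindex_bij_witness[of _ "\<lambda>(r,j). (r+j,j)" "\<lambda>(m,j). (m-j,j)"]) auto
    also have "\<dots> = (\<Sum>r\<le>k. \<Sum>j\<le>k-r. F (r+j) j)"
      by (simp add: sum.Sigma)
    finally show ?thesis .
  qed
  have s3: "(\<Sum>j\<le>k-r. F (r+j) j) = of_nat (k choose r) * (a r *
       (\<Sum>j\<le>k-r. of_nat ((k - r) choose j) * (bellQ D c (- c) j * bellP D c (k - r - j))))"
    if r: "r \<le> k" for r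
  proof -
    have "(\<Sum>j\<le>k-r. F (r+j) j) = (\<Sum>j\<le>k-r. of_nat (k choose r) * (a r *
       (of_nat ((k - r) choose j) * (bellQ D c (- c) j * bellP D c (k - r - j)))))"
    proof (intro sum.cong refl)
      fix j assume j: "j \<in> {..k-r}"
      have c: "(k choose (r+j)) * ((r+j) choose j) = (k choose r) * ((k - r) choose j)"
        using choose_mult[of r "r+j" k] j r binomial_symmetric[of j "r+j"] by simp
      have "a r * (of_nat ((k - r) choose j) * (bellQ D c (- c) j * bellP D c (k - r - j)))
         = of_nat ((k - r) choose j) * (a r * (bellQ D c (- c) j * bellP D c (k - r - j)))"
        by (metis mult.assoc mult_of_nat_commute)
      then show "F (r+j) j = of_nat (k choose r) * (a r *
       (of_nat ((k - r) choose j) * (bellQ D c (- c) j * bellP D c (k - r - j))))"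
        unfolding F_def using c by (simp add: mult.assoc)
    qed
    then show ?thesis by (simp add: sum_distrib_left)
  qed
  have "(\<Sum>r\<le>k. \<Sum>j\<le>k-r. F (r+j) j) = (\<Sum>r\<le>k. if r = k then a k else 0)"
  proof (intro sum.cong refl)
    fix r assume r: "r \<in> {..k}"
    show "(\<Sum>j\<le>k-r. F (r+j) j) = (if r = k then a k else 0)"
      using s3[of r] r R_id[of "k - r" c] by auto
  qed
  then show ?thesis using s1 s2 by simp
qed
end

theorem mainTheorem8:
  fixes D :: "'a::ring_1 \<Rightarrow> 'a" and n :: nat and a I astar :: "nat \<Rightarrow> 'a" and u :: 'a
  assumes deriv: "is_derivation D"
    and n2: "n \<ge> 2"
    and a0: "a 0 = 1"
    and binom_reg: "\<forall>k\<le>n. \<forall>x::'a. of_nat (n choose k) * x = 0 \<longrightarrow> x = 0"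
    and I0: "I 0 = 1" and I1: "I 1 = 0"
    and I_def: "\<forall>i. opL n a i = shift_pow D (a 1) n i
                  + (\<Sum>k=2..n. of_nat (n choose k) * I k * shift_pow D (a 1) (n - k) i)"
    and astar_def: "\<forall>i. (\<Sum>m\<le>n. of_nat (n choose m) * I m * shift_pow D (a 1 - u) (n - m) i)
                      = opL n astar i"
  shows "\<forall>k\<le>n.
           astar k = (\<Sum>m\<le>k. of_nat (k choose m) * I m * bellP D (a 1 - u) (k - m))
         \<and> astar k = (\<Sum>m\<le>k. of_nat (k choose m)
                        * (\<Sum>j\<le>m. of_nat (m choose j) * a (m - j) * bellQ D (a 1) (- a 1) j)
                        * bellP D (a 1 - u) (k - m))"
proof -
  interpret der D by (rule der.intro) (rule deriv)
  have cancel: "x = y" if "k \<le> n" "of_nat (n choose k) * x = of_nat (n choose k) * y" for k and x y :: 'a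
  proof -
    have "of_nat (n choose k) * (x - y) = 0" using that by (simp add: right_diff_distrib)
    then have "x - y = 0" using binom_reg that(1) by blast
    then show ?thesis by simp
  qed
  have claim1: "astar k = (\<Sum>m\<le>k. of_nat (k choose m) * I m * bellP D (a 1 - u) (k - m))"
    if k: "k \<le> n" for k
  proof -
    have "of_nat (n choose k) * (\<Sum>m\<le>k. of_nat (k choose m) * I m * bellP D (a 1 - u) (k - m))
       = of_nat (n choose k) * astar k"
      using astar_def[rule_format, of "n - k"] coeff_extract[OF k, of I "a 1 - u"] opL_coeff[OF k, of astar]
      by simp
    then show ?thesis using cancel[OF k] by metis
  qed
  have Isum: "opL n a i = (\<Sum>m\<le>n. of_nat (n choose m) * I m * shift_pow D (a 1) (n - m) i)" for i
  proof -
    have U: "{..n} = {0,1} \<union> {2..n}" using n2 by auto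
    have "(\<Sum>m\<le>n. of_nat (n choose m) * I m * shift_pow D (a 1) (n - m) i)
      = (\<Sum>m\<in>{0,1}. of_nat (n choose m) * I m * shift_pow D (a 1) (n - m) i)
       + (\<Sum>m=2..n. of_nat (n choose m) * I m * shift_pow D (a 1) (n - m) i)"
      unfolding U by (rule sum.union_disjoint) auto
    then show ?thesis using I_def I0 I1 by simp
  qed
  have star: "a k = (\<Sum>m\<le>k. of_nat (k choose m) * I m * bellP D (a 1) (k - m))"
    if k: "k \<le> n" for k
  proof -
    have "of_nat (n choose k) * (\<Sum>m\<le>k. of_nat (k choose m) * I m * bellP D (a 1) (k - m))
       = of_nat (n choose k) * a k"
      using Isum[of "n - k"] coeff_extract[OF k, of I "a 1"] opL_coeff[OF k, of a]
      by simp
    then show ?thesis using cancel[OF k] by metis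
  qed
  define J where "J = (\<lambda>m. \<Sum>j\<le>m. of_nat (m choose j) * a (m - j) * bellQ D (a 1) (- a 1) j)"
  have split: "(\<Sum>m\<le>k. of_nat (k choose m) * X m * bellP D b (k - m))
      = X k + (\<Sum>m<k. of_nat (k choose m) * X m * bellP D b (k - m))" for X :: "nat \<Rightarrow> 'a" and k b
    by (simp add: lessThan_Suc_atMost[symmetric])
  have IJ: "k \<le> n \<longrightarrow> I k = J k" for k
  proof (induction k rule: less_induct)
    case (less k)
    show ?case
    proof
      assume k: "k \<le> n"
      have e: "(\<Sum>m<k. of_nat (k choose m) * I m * bellP D (a 1) (k - m))
          = (\<Sum>m<k. of_nat (k choose m) * J m * bellP D (a 1) (k - m))"
        using less k by (intro sum.cong refl) auto
      have "I k + (\<Sum>m<k. of_nat (k choose m) * I m * bellP D (a 1) (k - m))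
          = J k + (\<Sum>m<k. of_nat (k choose m) * J m * bellP D (a 1) (k - m))"
        using star[OF k] inv_id[of k a "a 1"] split[where X=I and k=k and b="a 1"] split[where X=J and k=k and b="a 1"]
        unfolding J_def by simp
      then show "I k = J k" using e by simp
    qed
  qed
  show ?thesis
  proof (intro allI impI conjI)
    fix k assume k: "k \<le> n"
    show "astar k = (\<Sum>m\<le>k. of_nat (k choose m) * I m * bellP D (a 1 - u) (k - m))"
      by (rule claim1[OF k])
    also have "\<dots> = (\<Sum>m\<le>k. of_nat (k choose m) * J m * bellP D (a 1 - u) (k - m))"
      using IJ k by (intro sum.cong refl) auto
    finally show "astar k = (\<Sum>m\<le>k. of_nat (k choose m)
                        * (\<Sum>j\<le>m. of_nat (m choose j) * a (m - j) * bellQ D (a 1) (- a 1) j)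
                        * bellP D (a 1 - u) (k - m))" unfolding J_def .
  qed
qed

end
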